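(* Let $g:\overline D\to\mathbb{C}$ be smooth with $g|_D$ analytic and $|g|>0$ on $\overline D$. Then for any $\varepsilon_0>0$ and $k>0$ there exist $M>0$, $\alpha_0\in\mathbb{C}$, and pairs $(\alpha_i,N_i)$, $i=1,\dots,M$, with $\alpha_i\in\mathbb{C}$, $|\alpha_i|>1$ and $N_i\ge1$ integers, such that $$\Big\|g-\alpha_0\prod_{i=1}^M(z-\alpha_i)^{2N_i}\Big\|_{C^k(\overline D)}<\varepsilon_0.$$
   Context: $D=\{z\in\mathbb{C}:|z|<1\}$ is the open unit disc and $\overline D$ its closure. *)

theory Defs
  imports "HOL-Complex_Analysis.Complex_Analysis"
begin

text \<open>Real directional derivative of f at z in direction v, taken within the set S
  (S will be the closed unit disc, so boundary points are handled one-sidedly).\<close>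
definition dderiv :: "complex \<Rightarrow> complex set \<Rightarrow> (complex \<Rightarrow> complex) \<Rightarrow> complex \<Rightarrow> complex" where
  "dderiv v S f z = frechet_derivative f (at z within S) v"

text \<open>Iterated directional derivatives; directions 1 and i give the partials in x and y.\<close>
fun iter_pd :: "complex list \<Rightarrow> complex set \<Rightarrow> (complex \<Rightarrow> complex) \<Rightarrow> complex \<Rightarrow> complex" where
  "iter_pd [] S f = f"
| "iter_pd (v # ds) S f = dderiv v S (iter_pd ds S f)"

definition smooth_on_set :: "complex set \<Rightarrow> (complex \<Rightarrow> complex) \<Rightarrow> bool" where
  "smooth_on_set S f \<longleftrightarrow>
     (\<forall>ds. set ds \<subseteq> {1, \<i>} \<longrightarrow> (\<forall>z\<in>S. iter_pd ds S f differentiable (at z within S)))"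

definition Ck_norm :: "nat \<Rightarrow> complex set \<Rightarrow> (complex \<Rightarrow> complex) \<Rightarrow> real" where
  "Ck_norm k S f = (\<Sum>(a, b) \<in> {(a, b). a + b \<le> k}.
      (SUP z\<in>S. norm (iter_pd (replicate a 1 @ replicate b \<i>) S f z)))"

end

theory Submission imports Defs "HOL-Computational_Algebra.Fundamental_Theorem_Algebra" begin

lemma deriv_unique_cball:
  fixes f :: "complex \<Rightarrow> complex"
  assumes z: "z \<in> cball 0 1"
    and d1: "(f has_derivative f1) (at z within cball 0 1)"
    and d2: "(f has_derivative f2) (at z within cball 0 1)"
  shows "f1 = f2"
proof -
  interpret l1: bounded_linear f1 using d1 by (rule has_derivative_bounded_linear)
  interpret l2: bounded_linear f2 using d2 by (rule has_derivative_bounded_linear)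
  have key: "f1 (w - z) = f2 (w - z)" if w: "w \<in> cball 0 1" for w
  proof -
    let ?g = "\<lambda>t::real. z + t *\<^sub>R (w - z)"
    have gd: "(?g has_derivative (\<lambda>t. t *\<^sub>R (w - z))) (at 0 within {0..1})"
      by (auto intro!: derivative_eq_intros)
    have sub: "?g ` {0..1} \<subseteq> cball 0 1"
    proof
      fix y assume "y \<in> ?g ` {0..1}"
      then obtain t where t: "t \<in> {0..1}" "y = z + t *\<^sub>R (w - z)" by auto
      have "y = (1 - t) *\<^sub>R z + t *\<^sub>R w" using t by (simp add: algebra_simps)
      then show "y \<in> cball 0 1"
        using convexD[OF convex_cball[of 0 1] z w, of "1 - t" t] t by auto
    qed
    have "((f \<circ> ?g) has_derivative (f1 \<circ> (\<lambda>t. t *\<^sub>R (w - z)))) (at 0 within {0..1})"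
      by (rule diff_chain_within[OF gd]) (use has_derivative_subset[OF d1 sub] in simp)
    moreover have "((f \<circ> ?g) has_derivative (f2 \<circ> (\<lambda>t. t *\<^sub>R (w - z)))) (at 0 within {0..1})"
      by (rule diff_chain_within[OF gd]) (use has_derivative_subset[OF d2 sub] in simp)
    ultimately have "f1 \<circ> (\<lambda>t. t *\<^sub>R (w - z)) = f2 \<circ> (\<lambda>t. t *\<^sub>R (w - z))"
    proof (rule frechet_derivative_unique_within)
      fix i :: real and e :: real assume "i \<in> Basis" "e > 0"
      then show "\<exists>d. 0 < \<bar>d\<bar> \<and> \<bar>d\<bar> < e \<and> 0 + d *\<^sub>R i \<in> {0..1}"
        by (intro exI[of _ "min (e/2) (1/2)"]) auto
    qed
    then show ?thesis by (metis comp_apply scaleR_one)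
  qed
  show ?thesis
  proof
    fix v :: complex
    define c where "c = 2 * (norm v + 1)"
    have c: "c > 0" unfolding c_def by (simp add: add_nonneg_pos)
    define h where "h = v /\<^sub>R c"
    have "norm h = norm v / c" unfolding h_def using c by (simp add: field_simps)
    also have "\<dots> \<le> 1" using c by (simp add: c_def divide_le_eq)
    finally have "norm h \<le> 1" .
    then have "h \<in> cball 0 1" by simp
    from key[OF this] key[of 0] have "f1 h = f2 h"
      by (simp add: l1.diff l2.diff l1.neg l2.neg)
    moreover have "v = c *\<^sub>R h" unfolding h_def using c by simp
    ultimately show "f1 v = f2 v" by (simp add: l1.scaleR l2.scaleR)
  qed
qed

lemma frechet_eq_cball:
  fixes f :: "complex \<Rightarrow> complex"
  assumes z: "z \<in> cball 0 1" and d: "(f has_derivative f') (at z within cball 0 1)"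
  shows "frechet_derivative f (at z within cball 0 1) = f'"
proof -
  have "f differentiable (at z within cball 0 1)" using d by (auto simp: differentiable_def)
  then have "(f has_derivative frechet_derivative f (at z within cball 0 1)) (at z within cball 0 1)"
    by (simp add: frechet_derivative_works)
  from deriv_unique_cball[OF z this d] show ?thesis .
qed

lemma iter_pd_holo:
  fixes h :: "complex \<Rightarrow> complex"
  assumes U: "open U" and h: "h holomorphic_on U"
  shows "\<forall>z \<in> cball 0 1 \<inter> U. iter_pd ds (cball 0 1) h z = prod_list ds * (deriv ^^ length ds) h z"
proof (induction ds)
  case Nil
  then show ?case by simp
next
  case (Cons v ds)
  show ?case
  proof
    fix z assume z: "z \<in> cball 0 1 \<inter> U"
    let ?n = "length ds" and ?c = "prod_list ds"
    let ?H = "\<lambda>w. ?c * (deriv ^^ ?n) h w"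
    let ?D = "deriv ((deriv ^^ ?n) h) z"
    have hol: "(deriv ^^ ?n) h holomorphic_on U" by (rule holomorphic_higher_deriv[OF h U])
    have "((deriv ^^ ?n) h has_field_derivative ?D) (at z)"
      using holomorphic_derivI[OF hol U, of z UNIV] z by simp
    then have "(?H has_field_derivative ?c * ?D) (at z within cball 0 1)"
      by (intro DERIV_cmult has_field_derivative_at_within[where s="cball 0 1"])
    then have d1: "(?H has_derivative (\<lambda>x. (?c * ?D) * x)) (at z within cball 0 1)"
      by (simp add: has_field_derivative_def)
    obtain d where d: "d > 0" "ball z d \<subseteq> U" using U z by (meson IntD2 openE)
    have "(iter_pd ds (cball 0 1) h has_derivative (\<lambda>x. (?c * ?D) * x)) (at z within cball 0 1)"
    proof (rule has_derivative_transform_within[OF d1 d(1)])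
      show "z \<in> cball 0 1" using z by auto
      fix x' assume "x' \<in> cball 0 1" "dist x' z < d"
      then have "x' \<in> cball 0 1 \<inter> U" using d by (auto simp: dist_commute)
      then show "?H x' = iter_pd ds (cball 0 1) h x'" using Cons.IH by auto
    qed
    from frechet_eq_cball[OF _ this] z
    have "iter_pd (v # ds) (cball 0 1) h z = (?c * ?D) * v" by (simp add: dderiv_def)
    then show "iter_pd (v # ds) (cball 0 1) h z = prod_list (v # ds) * (deriv ^^ length (v # ds)) h z"
      by (simp add: algebra_simps)
  qed
qed

lemma smooth_entire:
  fixes h :: "complex \<Rightarrow> complex"
  assumes h: "h holomorphic_on UNIV"
  shows "smooth_on_set (cball 0 1) h"
  unfolding smooth_on_set_def
proof (intro allI impI ballI)
  fix ds :: "complex list" and z :: complex assume z: "z \<in> cball 0 1"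
  let ?H = "\<lambda>w. prod_list ds * (deriv ^^ length ds) h w"
  have hol: "?H holomorphic_on UNIV"
    by (intro holomorphic_intros holomorphic_higher_deriv[OF h]) auto
  then have "?H field_differentiable (at z)"
    using holomorphic_on_imp_differentiable_at by blast
  then obtain f' where "(?H has_derivative f') (at z within cball 0 1)"
    by (meson field_differentiable_imp_differentiable differentiable_at_withinI differentiable_def)
  then have "(iter_pd ds (cball 0 1) h has_derivative f') (at z within cball 0 1)"
    by (rule has_derivative_transform_within[of _ _ _ _ 1]) (use z iter_pd_holo[OF open_UNIV h, of ds] in auto)
  then show "iter_pd ds (cball 0 1) h differentiable (at z within cball 0 1)"
    by (auto simp: differentiable_def)
qed

lemma iter_pd_diff:
  fixes f h :: "complex \<Rightarrow> complex"
  assumes f: "smooth_on_set (cball 0 1) f" and h: "smooth_on_set (cball 0 1) h"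
  shows "set ds \<subseteq> {1, \<i>} \<Longrightarrow> z \<in> cball 0 1 \<Longrightarrow>
     iter_pd ds (cball 0 1) (\<lambda>z. f z - h z) z = iter_pd ds (cball 0 1) f z - iter_pd ds (cball 0 1) h z"
proof (induction ds arbitrary: z)
  case Nil
  then show ?case by simp
next
  case (Cons v ds)
  let ?S = "cball 0 1 :: complex set"
  let ?F = "iter_pd ds ?S f" and ?H = "iter_pd ds ?S h"
  have sd: "set ds \<subseteq> {1, \<i>}" using Cons.prems by auto
  have "?F differentiable (at z within ?S)" using f Cons.prems sd unfolding smooth_on_set_def by blast
  then have dF: "(?F has_derivative frechet_derivative ?F (at z within ?S)) (at z within ?S)"
    by (simp add: frechet_derivative_works)
  have "?H differentiable (at z within ?S)" using h Cons.prems sd unfolding smooth_on_set_def by blast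
  then have dH: "(?H has_derivative frechet_derivative ?H (at z within ?S)) (at z within ?S)"
    by (simp add: frechet_derivative_works)
  have "((\<lambda>w. ?F w - ?H w) has_derivative
      (\<lambda>x. frechet_derivative ?F (at z within ?S) x - frechet_derivative ?H (at z within ?S) x)) (at z within ?S)"
    by (rule has_derivative_diff[OF dF dH])
  then have "(iter_pd ds ?S (\<lambda>z. f z - h z) has_derivative
      (\<lambda>x. frechet_derivative ?F (at z within ?S) x - frechet_derivative ?H (at z within ?S) x)) (at z within ?S)"
    by (rule has_derivative_transform_within[of _ _ _ _ 1]) (use Cons.prems Cons.IH[OF sd] in auto)
  from frechet_eq_cball[OF Cons.prems(2) this]
  show ?case by (simp add: dderiv_def)
qed

lemma norm_prod_list_unit:
  "set ds \<subseteq> {1, \<i>} \<Longrightarrow> norm (prod_list ds :: complex) = 1"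
  by (induction ds) (auto simp: norm_mult)

lemma smooth_cont:
  assumes "smooth_on_set (cball 0 1) f" "set ds \<subseteq> {1, \<i>}"
  shows "continuous_on (cball 0 1) (iter_pd ds (cball 0 1) f)"
  using assms unfolding smooth_on_set_def
  by (auto simp: continuous_on_eq_continuous_within intro!: differentiable_imp_continuous_within)

lemma step1_single:
  fixes g :: "complex \<Rightarrow> complex" and \<delta> :: real
  assumes sm: "smooth_on_set (cball 0 1) g" and holg: "g holomorphic_on ball 0 1" and \<delta>: "\<delta> > 0"
  shows "eventually (\<lambda>r. \<forall>z\<in>ball 0 1. norm ((deriv ^^ n) g z - complex_of_real r ^ n * (deriv ^^ n) g (complex_of_real r * z)) \<le> \<delta>) (at_left 1)"
proof -
  let ?S = "cball 0 1 :: complex set"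
  define G where "G = iter_pd (replicate n 1) ?S g"
  have Gc: "continuous_on ?S G" unfolding G_def by (rule smooth_cont[OF sm]) auto
  have Geq: "G z = (deriv ^^ n) g z" if "z \<in> ball 0 1" for z
    using iter_pd_holo[OF open_ball holg, of "replicate n 1"] that unfolding G_def by auto
  have "uniformly_continuous_on ?S G" by (rule compact_uniformly_continuous[OF Gc compact_cball])
  then obtain \<eta> where \<eta>: "\<eta> > 0" and uc: "\<And>x x'. x \<in> ?S \<Longrightarrow> x' \<in> ?S \<Longrightarrow> dist x' x < \<eta> \<Longrightarrow> dist (G x') (G x) < \<delta>/2"
    unfolding uniformly_continuous_on_def using \<delta> by (metis half_gt_zero)
  have "bounded (G ` ?S)" by (rule compact_imp_bounded[OF compact_continuous_image[OF Gc compact_cball]])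
  then obtain C where C: "\<And>z. z \<in> ?S \<Longrightarrow> norm (G z) \<le> C" unfolding bounded_iff by (metis image_eqI)
  have "((\<lambda>r::real. (1 - r ^ n) * C) \<longlongrightarrow> (1 - 1 ^ n) * C) (at_left 1)"
    by (intro tendsto_intros)
  then have "((\<lambda>r::real. (1 - r ^ n) * C) \<longlongrightarrow> 0) (at_left 1)" by simp
  then have ev1: "eventually (\<lambda>r::real. (1 - r ^ n) * C < \<delta>/2) (at_left 1)"
    using \<delta> by (intro order_tendstoD) auto
  have ev2: "eventually (\<lambda>r::real. r \<in> {max 0 (1 - \<eta>)<..<1}) (at_left 1)"
    using \<eta> by (intro eventually_at_left_real) auto
  show ?thesis
    using ev1 ev2
  proof eventually_elim
    case (elim r)
    then have r: "0 < r" "r < 1" "1 - \<eta> < r" by auto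
    show ?case
    proof
      fix z :: complex assume z: "z \<in> ball 0 1"
      have nz: "norm z < 1" using z by simp
      have nrz: "norm (complex_of_real r * z) = r * norm z" using r by (simp add: norm_mult)
      have "r * norm z \<le> norm z" using r by (simp add: mult_left_le_one_le)
      then have rz: "complex_of_real r * z \<in> ball 0 1" using nrz nz by simp
      have "complex_of_real r * z - z = - (complex_of_real (1 - r) * z)" by (simp add: algebra_simps)
      then have "dist (complex_of_real r * z) z = norm (complex_of_real (1 - r)) * norm z"
        by (simp only: dist_norm norm_minus_cancel norm_mult)
      also have "norm (complex_of_real (1 - r)) * norm z = (1 - r) * norm z" using r by (simp only: norm_of_real)
      also have "\<dots> \<le> (1 - r) * 1" using r nz by (intro mult_left_mono) auto
      also have "\<dots> < \<eta>" using r by simp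
      finally have d1: "norm (G z - G (complex_of_real r * z)) < \<delta>/2"
        using uc[of z "complex_of_real r * z"] z rz by (simp add: dist_norm norm_minus_commute)
      have p1: "0 \<le> 1 - r ^ n" "r ^ n \<le> 1" using r by (auto simp: power_le_one)
      have "norm ((1 - complex_of_real r ^ n) * G (complex_of_real r * z)) = (1 - r ^ n) * norm (G (complex_of_real r * z))"
      proof -
        have "1 - complex_of_real r ^ n = complex_of_real (1 - r ^ n)" by simp
        then show ?thesis using p1 by (simp only: norm_mult norm_of_real abs_of_nonneg)
      qed
      also have "\<dots> \<le> (1 - r ^ n) * C" using C[of "complex_of_real r * z"] rz p1 by (intro mult_left_mono) auto
      finally have d2: "norm ((1 - complex_of_real r ^ n) * G (complex_of_real r * z)) < \<delta>/2" using elim by linarith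
      have "(deriv ^^ n) g z - complex_of_real r ^ n * (deriv ^^ n) g (complex_of_real r * z)
          = (G z - G (complex_of_real r * z)) + (1 - complex_of_real r ^ n) * G (complex_of_real r * z)"
        using Geq[OF z] Geq[OF rz] by (simp add: algebra_simps)
      also have "norm \<dots> \<le> \<delta>" using norm_triangle_ineq[of "G z - G (complex_of_real r * z)" "(1 - complex_of_real r ^ n) * G (complex_of_real r * z)"] d1 d2 by linarith
      finally show "norm ((deriv ^^ n) g z - complex_of_real r ^ n * (deriv ^^ n) g (complex_of_real r * z)) \<le> \<delta>" .
    qed
  qed
qed

lemma step1:
  fixes g :: "complex \<Rightarrow> complex" and \<delta> :: real
  assumes sm: "smooth_on_set (cball 0 1) g" and holg: "g holomorphic_on ball 0 1" and \<delta>: "\<delta> > 0"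
  shows "\<exists>r. 0 < r \<and> r < 1 \<and> (\<forall>n\<le>k. \<forall>z\<in>ball 0 1. norm ((deriv ^^ n) g z - complex_of_real r ^ n * (deriv ^^ n) g (complex_of_real r * z)) \<le> \<delta>)"
proof -
  have "eventually (\<lambda>r. \<forall>n\<in>{..k}. \<forall>z\<in>ball 0 1. norm ((deriv ^^ n) g z - complex_of_real r ^ n * (deriv ^^ n) g (complex_of_real r * z)) \<le> \<delta>) (at_left 1)"
    by (rule eventually_ball_finite) (use step1_single[OF sm holg \<delta>] in auto)
  moreover have "eventually (\<lambda>r::real. r \<in> {0<..<1}) (at_left 1)"
    by (intro eventually_at_left_real) auto
  ultimately have "eventually (\<lambda>r. r \<in> {0<..<1} \<and> (\<forall>n\<in>{..k}. \<forall>z\<in>ball 0 1. norm ((deriv ^^ n) g z - complex_of_real r ^ n * (deriv ^^ n) g (complex_of_real r * z)) \<le> \<delta>)) (at_left 1)"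
    by eventually_elim auto
  then obtain r where "r \<in> {0<..<1}" "\<forall>n\<in>{..k}. \<forall>z\<in>ball 0 1. norm ((deriv ^^ n) g z - complex_of_real r ^ n * (deriv ^^ n) g (complex_of_real r * z)) \<le> \<delta>"
    using eventually_happens'[OF trivial_limit_at_left_real] by blast
  then show ?thesis by auto
qed

lemma cauchy_step:
  fixes E :: "complex \<Rightarrow> complex"
  assumes \<rho>: "1 < \<rho>" and hol: "E holomorphic_on ball 0 R" and \<rho>R: "\<rho> < R"
    and small: "\<forall>w\<in>cball 0 \<rho>. norm (E w) < \<epsilon>1"
    and \<epsilon>1: "\<epsilon>1 = \<epsilon> * (min 1 (\<rho> - 1)) ^ k / fact k" and \<epsilon>: "\<epsilon> > 0"
    and n: "n \<le> k" and z: "z \<in> ball 0 1"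
  shows "norm ((deriv ^^ n) E z) \<le> \<epsilon>"
proof -
  define dd where "dd = min 1 (\<rho> - 1)"
  have dd: "0 < dd" "dd \<le> 1" using \<rho> by (auto simp: dd_def)
  have sub: "cball z dd \<subseteq> cball 0 \<rho>"
  proof
    fix w assume "w \<in> cball z dd"
    then have "norm (w - z) \<le> dd" by (simp add: dist_norm norm_minus_commute)
    moreover have "norm w \<le> norm z + norm (w - z)" by (metis add.commute diff_add_cancel norm_triangle_ineq)
    moreover have "norm z < 1" using z by simp
    ultimately show "w \<in> cball 0 \<rho>" by (simp add: dd_def)
  qed
  have subR: "cball 0 \<rho> \<subseteq> ball 0 R" using \<rho>R by auto
  have e1pos: "\<epsilon>1 > 0" unfolding \<epsilon>1 using \<epsilon> dd by (simp add: dd_def)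
  have fk: "fact n \<le> (fact k :: real)" using n by (rule fact_mono)
  have dk: "dd ^ k \<le> dd ^ n" using dd n by (intro power_decreasing) auto
  have key: "fact n * \<epsilon>1 / dd ^ n \<le> \<epsilon>"
  proof -
    have "fact n * dd ^ k \<le> fact k * dd ^ n"
      by (rule mult_mono[OF fk dk]) (use dd in auto)
    then have "\<epsilon> * (fact n * dd ^ k) \<le> \<epsilon> * (fact k * dd ^ n)" using \<epsilon> by simp
    then show ?thesis unfolding \<epsilon>1 dd_def[symmetric] using dd
      by (simp add: field_simps)
  qed
  show ?thesis
  proof (cases "n = 0")
    case True
    have "norm (E z) < \<epsilon>1" using small z \<rho> by auto
    also have "\<epsilon>1 \<le> \<epsilon>" using key True by simp
    finally show ?thesis using True by simp
  next
    case False
    have "norm ((deriv ^^ n) E z) \<le> fact n * \<epsilon>1 / dd ^ n"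
    proof (rule Cauchy_higher_deriv_bound[where y=0])
      show "E holomorphic_on ball z dd"
        by (rule holomorphic_on_subset[OF hol]) (use sub subR ball_subset_cball in blast)
      show "continuous_on (cball z dd) E"
        by (rule continuous_on_subset[OF holomorphic_on_imp_continuous_on[OF hol]]) (use sub subR in blast)
      show "\<And>w. w \<in> ball z dd \<Longrightarrow> E w \<in> ball 0 \<epsilon>1"
        using small sub ball_subset_cball by (force simp: dist_norm)
    qed (use dd False in auto)
    then show ?thesis using key by linarith
  qed
qed

lemma step2:
  fixes f :: "complex \<Rightarrow> complex" and R \<epsilon> :: real
  assumes R: "R > 1" and holf: "f holomorphic_on ball 0 R" and nz: "\<forall>z\<in>ball 0 R. f z \<noteq> 0" and \<epsilon>: "\<epsilon> > 0"
  shows "\<exists>(c :: nat \<Rightarrow> complex) (d :: nat). d \<ge> 1 \<and> c d \<noteq> 0 \<and>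
     (\<forall>z\<in>cball 0 1. (\<Sum>j\<le>d. c j * z ^ j) \<noteq> 0) \<and>
     (\<forall>n\<le>k. \<forall>z\<in>ball 0 1. norm ((deriv ^^ n) f z - (deriv ^^ n) (\<lambda>z. (\<Sum>j\<le>d. c j * z ^ j) ^ 2) z) \<le> \<epsilon>)"
proof -
  obtain s where hols: "s holomorphic_on ball 0 R" and fs: "\<And>z. z \<in> ball 0 R \<Longrightarrow> f z = s z ^ 2"
    using contractible_imp_holomorphic_sqrt[OF holf convex_imp_contractible[OF convex_ball]] nz by blast
  define \<rho> where "\<rho> = (1 + R) / 2"
  define \<rho>3 where "\<rho>3 = (\<rho> + R) / 2"
  have \<rho>: "1 < \<rho>" "\<rho> < \<rho>3" "\<rho>3 < R" using R by (auto simp: \<rho>_def \<rho>3_def)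
  define K where "K = cball (0::complex) \<rho>"
  have KR: "K \<subseteq> ball 0 R" using \<rho> by (auto simp: K_def)
  have sK: "continuous_on K s" using holomorphic_on_imp_continuous_on[OF hols] KR continuous_on_subset by blast
  have snz: "s z \<noteq> 0" if "z \<in> K" for z using fs[of z] nz KR that by auto
  obtain x0 where x0: "x0 \<in> K" "\<And>y. y \<in> K \<Longrightarrow> norm (s x0) \<le> norm (s y)"
  proof -
    have "continuous_on K (\<lambda>z. norm (s z))" using sK by (rule continuous_on_norm)
    moreover have "compact K" "K \<noteq> {}" using \<rho> by (auto simp: K_def)
    ultimately show ?thesis using continuous_attains_inf[of K "\<lambda>z. norm (s z)"] that by blast
  qed
  define m where "m = norm (s x0)"
  have m: "m > 0" using snz[OF x0(1)] by (simp add: m_def)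
  have "bounded (s ` K)" by (rule compact_imp_bounded[OF compact_continuous_image[OF sK]]) (simp add: K_def)
  then obtain B0 where B0: "\<And>z. z \<in> K \<Longrightarrow> norm (s z) \<le> B0" unfolding bounded_iff by (metis image_eqI)
  define B where "B = max B0 0"
  have B1: "\<And>z. z \<in> K \<Longrightarrow> norm (s z) \<le> B" using B0 unfolding B_def by (meson max.coboundedI1)
  have B2: "B \<ge> 0" unfolding B_def by simp
  note B = B1 B2
  define dd where "dd = min 1 (\<rho> - 1)"
  have dd: "dd > 0" using \<rho> by (simp add: dd_def)
  define \<epsilon>1 where "\<epsilon>1 = \<epsilon> * dd ^ k / fact k"
  have \<epsilon>1: "\<epsilon>1 > 0" using \<epsilon> dd by (simp add: \<epsilon>1_def)
  define \<eta> where "\<eta> = min (m/2) (\<epsilon>1 / (2 * B + m + 1))"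
  have \<eta>1: "\<eta> > 0" unfolding \<eta>_def using m \<epsilon>1 B(2) by (simp add: add_nonneg_pos)
  have \<eta>2: "\<eta> \<le> m/2" unfolding \<eta>_def by (rule min.cobounded1)
  have \<eta>3: "\<eta> \<le> \<epsilon>1 / (2 * B + m + 1)" unfolding \<eta>_def by (rule min.cobounded2)
  note \<eta> = \<eta>1 \<eta>2 \<eta>3
  define a where "a = (\<lambda>j. (deriv ^^ j) s 0 / fact j)"
  have "summable (\<lambda>j. a j * (complex_of_real \<rho>3) ^ j)"
  proof -
    have "complex_of_real \<rho>3 \<in> ball 0 R" using \<rho> by simp
    from holomorphic_power_series[OF hols this] show ?thesis
      unfolding a_def by (auto intro: sums_summable)
  qed
  then have "norm (complex_of_real \<rho>3) \<le> conv_radius a" by (rule conv_radius_geI)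
  then have "ereal \<rho> < conv_radius a" using \<rho> by (auto elim!: less_le_trans[rotated])
  from powser_uniform_limit[OF this, of 0]
  have ul: "uniform_limit K (\<lambda>n x. \<Sum>i<n. a i * x ^ i) (\<lambda>x. suminf (\<lambda>i. a i * x ^ i)) sequentially"
    by (simp add: K_def)
  have suml: "suminf (\<lambda>i. a i * x ^ i) = s x" if "x \<in> K" for x
  proof -
    have "(\<lambda>i. a i * (x - 0) ^ i) sums s x"
      unfolding a_def by (rule holomorphic_power_series[OF hols]) (use that KR in auto)
    then show ?thesis by (simp add: sums_iff)
  qed
  obtain N where N: "\<And>n x. n \<ge> N \<Longrightarrow> x \<in> K \<Longrightarrow> dist (\<Sum>i<n. a i * x ^ i) (suminf (\<lambda>i. a i * x ^ i)) < \<eta>/2"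
    using ul \<eta>(1) unfolding uniform_limit_sequentially_iff by (meson half_gt_zero)
  define d where "d = Suc N"
  define t where "t = \<eta> / (2 * \<rho> ^ d)"
  have t: "t > 0" using \<eta> \<rho> by (simp add: t_def)
  define c where "c = (\<lambda>j. if j = d then complex_of_real t else a j)"
  define T where "T = (\<lambda>z. \<Sum>j\<le>d. c j * z ^ j)"
  have Teq: "T z = (\<Sum>j<d. a j * z ^ j) + complex_of_real t * z ^ d" for z
  proof -
    have "T z = (\<Sum>j<Suc d. c j * z ^ j)" unfolding T_def lessThan_Suc_atMost ..
    also have "\<dots> = (\<Sum>j<d. c j * z ^ j) + c d * z ^ d" by simp
    also have "(\<Sum>j<d. c j * z ^ j) = (\<Sum>j<d. a j * z ^ j)" by (rule sum.cong) (auto simp: c_def)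
    finally show ?thesis by (simp add: c_def)
  qed
  have Tclose: "norm (T z - s z) < \<eta>" if z: "z \<in> K" for z
  proof -
    have h1: "norm ((\<Sum>j<d. a j * z ^ j) - s z) < \<eta>/2"
      using N[of d z] z suml[OF z] by (simp add: d_def dist_norm)
    have h2: "norm (complex_of_real t * z ^ d) \<le> \<eta>/2"
    proof -
      have "norm z \<le> \<rho>" using z by (simp add: K_def)
      then have "norm z ^ d \<le> \<rho> ^ d" by (intro power_mono) auto
      then have "t * norm z ^ d \<le> t * \<rho> ^ d" using t by (intro mult_left_mono) auto
      also have "t * \<rho> ^ d = \<eta>/2" using \<rho> by (simp add: t_def)
      finally show ?thesis using t by (simp add: norm_mult norm_power)
    qed
    have eq: "T z - s z = ((\<Sum>j<d. a j * z ^ j) - s z) + complex_of_real t * z ^ d"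
      by (simp add: Teq)
    show ?thesis unfolding eq
      using norm_triangle_ineq[of "(\<Sum>j<d. a j * z ^ j) - s z" "complex_of_real t * z ^ d"] h1 h2 by linarith
  qed
  have TK: "T z \<noteq> 0" if z: "z \<in> K" for z
  proof
    assume "T z = 0"
    then have "norm (s z) < \<eta>" using Tclose[OF z] by simp
    moreover have "m \<le> norm (s z)" using x0(2)[OF z] by (simp add: m_def)
    ultimately show False using \<eta>(2) m by linarith
  qed
  define E where "E = (\<lambda>z. f z - T z ^ 2)"
  have holT: "T holomorphic_on UNIV" unfolding T_def by (intro holomorphic_intros)
  have holE: "E holomorphic_on ball 0 R" unfolding E_def
    by (intro holomorphic_intros holf holomorphic_on_subset[OF holT]) auto
  have Esmall: "\<forall>w\<in>cball 0 \<rho>. norm (E w) < \<epsilon>1"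
  proof
    fix w :: complex assume "w \<in> cball 0 \<rho>"
    then have w: "w \<in> K" by (simp add: K_def)
    have bnd: "norm (s w + T w) \<le> 2 * B + m + 1"
    proof -
      have "s w + T w = 2 * s w + (T w - s w)" by simp
      then have "norm (s w + T w) \<le> norm (2 * s w) + norm (T w - s w)" by (metis norm_triangle_ineq)
      then have "norm (s w + T w) \<le> norm (s w) + norm (s w) + norm (T w - s w)" by (simp add: norm_mult)
      then show ?thesis using B(1)[OF w] Tclose[OF w] \<eta>(2) m by linarith
    qed
    have Cpos: "2 * B + m + 1 > 0" using B(2) m by linarith
    have "E w = (s w - T w) * (s w + T w)" using fs[of w] KR w by (auto simp: E_def power2_eq_square algebra_simps)
    then have "norm (E w) = norm (T w - s w) * norm (s w + T w)" by (simp add: norm_mult norm_minus_commute)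
    also have "norm (T w - s w) * norm (s w + T w) \<le> norm (T w - s w) * (2 * B + m + 1)"
      by (rule mult_left_mono[OF bnd]) simp
    also have "\<dots> < \<eta> * (2 * B + m + 1)"
      by (rule mult_strict_right_mono[OF Tclose[OF w] Cpos])
    also have "\<dots> \<le> \<epsilon>1" using \<eta>(3) Cpos by (simp add: field_simps)
    finally show "norm (E w) < \<epsilon>1" .
  qed
  show ?thesis
  proof (intro exI conjI)
    show "d \<ge> 1" by (simp add: d_def)
    show "c d \<noteq> 0" using t by (simp add: c_def)
    show "\<forall>z\<in>cball 0 1. (\<Sum>j\<le>d. c j * z ^ j) \<noteq> 0"
      using TK \<rho> unfolding T_def K_def by auto
    show "\<forall>n\<le>k. \<forall>z\<in>ball 0 1. norm ((deriv ^^ n) f z - (deriv ^^ n) (\<lambda>z. (\<Sum>j\<le>d. c j * z ^ j) ^ 2) z) \<le> \<epsilon>"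
    proof (intro allI impI ballI)
      fix n z assume n: "n \<le> k" and z: "z \<in> ball (0::complex) 1"
      have zR: "z \<in> ball 0 R" using z R by auto
      have "(deriv ^^ n) E z = (deriv ^^ n) f z - (deriv ^^ n) (\<lambda>z. T z ^ 2) z"
        unfolding E_def by (rule higher_deriv_diff[OF holf _ open_ball zR]) (intro holomorphic_intros holomorphic_on_subset[OF holT], auto)
      moreover have "norm ((deriv ^^ n) E z) \<le> \<epsilon>"
        by (rule cauchy_step[OF \<rho>(1) holE _ Esmall _ \<epsilon> n z]) (use \<rho> in \<open>auto simp: \<epsilon>1_def dd_def\<close>)
      ultimately show "norm ((deriv ^^ n) f z - (deriv ^^ n) (\<lambda>z. (\<Sum>j\<le>d. c j * z ^ j) ^ 2) z) \<le> \<epsilon>"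
        unfolding T_def by simp
    qed
  qed
qed

lemma factor_square:
  fixes p :: "complex poly"
  assumes deg: "degree p \<ge> 1" and nz: "\<forall>z\<in>cball 0 1. poly p z \<noteq> 0"
  shows "\<exists>(M::nat) (\<alpha>0::complex) (\<alpha>::nat \<Rightarrow> complex) (N::nat \<Rightarrow> nat). M > 0 \<and>
           (\<forall>i\<in>{1..M}. norm (\<alpha> i) > 1 \<and> N i \<ge> 1) \<and>
           (\<forall>z. (poly p z)^2 = \<alpha>0 * (\<Prod>i=1..M. (z - \<alpha> i) ^ (2 * N i)))"
proof -
  have p0: "p \<noteq> 0" using deg by auto
  define R where "R = {z. poly p z = 0}"
  have finR: "finite R" unfolding R_def by (rule poly_roots_finite[OF p0])
  have dec: "smult (lead_coeff p) (\<Prod>z\<in>R. [:-z, 1:] ^ order z p) = p"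
    unfolding R_def by (rule complex_poly_decompose)
  have Rne: "R \<noteq> {}"
  proof
    assume "R = {}"
    then have "p = [:lead_coeff p:]" using dec by simp
    then have "degree p = 0" by (metis degree_pCons_0)
    with deg show False by simp
  qed
  obtain h where h: "bij_betw h {1..card R} R" using ex_bij_betw_nat_finite_1[OF finR] by blast
  define M where "M = card R"
  have M: "M > 0" unfolding M_def using finR Rne by (simp add: card_gt_0_iff)
  have pz: "poly p z = lead_coeff p * (\<Prod>w\<in>R. (z - w) ^ order w p)" for z
  proof -
    have "poly p z = poly (smult (lead_coeff p) (\<Prod>z\<in>R. [:-z, 1:] ^ order z p)) z" using dec by simp
    also have "\<dots> = lead_coeff p * (\<Prod>w\<in>R. (z - w) ^ order w p)"
      by (simp add: poly_prod poly_power)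
    finally show ?thesis .
  qed
  show ?thesis
  proof (intro exI conjI)
    show "M > 0" by (rule M)
    show "\<forall>i\<in>{1..M}. norm (h i) > 1 \<and> order (h i) p \<ge> 1"
    proof
      fix i assume "i \<in> {1..M}"
      then have hi: "h i \<in> R" using h unfolding M_def bij_betw_def by auto
      then have r: "poly p (h i) = 0" unfolding R_def by simp
      then have "h i \<notin> cball 0 1" using nz by auto
      moreover have "order (h i) p \<noteq> 0" using r p0 order_root by blast
      ultimately show "norm (h i) > 1 \<and> order (h i) p \<ge> 1" by auto
    qed
    show "\<forall>z. (poly p z)^2 = (lead_coeff p)^2 * (\<Prod>i=1..M. (z - h i) ^ (2 * order (h i) p))"
    proof
      fix z
      have "(\<Prod>i=1..M. (z - h i) ^ (2 * order (h i) p)) = (\<Prod>w\<in>R. (z - w) ^ (2 * order w p))"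
        unfolding M_def by (rule prod.reindex_bij_betw[OF h])
      also have "\<dots> = (\<Prod>w\<in>R. (z - w) ^ order w p) ^ 2"
        by (simp add: prod_power_distrib flip: power_mult) (simp add: mult.commute)
      finally show "(poly p z)^2 = (lead_coeff p)^2 * (\<Prod>i=1..M. (z - h i) ^ (2 * order (h i) p))"
        by (simp add: pz power_mult_distrib)
    qed
  qed
qed

lemma propA:
  fixes g :: "complex \<Rightarrow> complex" and \<delta> :: real and k :: nat
  assumes "smooth_on_set (cball 0 1) g"
    and "g analytic_on ball 0 1"
    and "\<forall>z\<in>cball 0 1. norm (g z) > 0"
    and "\<delta> > 0"
  shows "\<exists>(M::nat) (\<alpha>0::complex) (\<alpha>::nat \<Rightarrow> complex) (N::nat \<Rightarrow> nat). M > 0 \<and>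
           (\<forall>i\<in>{1..M}. norm (\<alpha> i) > 1 \<and> N i \<ge> 1) \<and>
           (\<forall>n\<le>k. \<forall>z\<in>ball 0 1. norm ((deriv ^^ n) g z - (deriv ^^ n) (\<lambda>z. \<alpha>0 * (\<Prod>i=1..M. (z - \<alpha> i) ^ (2 * N i))) z) \<le> \<delta>)"
proof -
  have holg: "g holomorphic_on ball 0 1" using assms(2) by (simp add: analytic_imp_holomorphic)
  have \<delta>2: "\<delta>/2 > 0" using assms(4) by simp
  obtain r where r: "0 < r" "r < 1"
    and est1: "\<forall>n\<le>k. \<forall>z\<in>ball 0 1. norm ((deriv ^^ n) g z - complex_of_real r ^ n * (deriv ^^ n) g (complex_of_real r * z)) \<le> \<delta>/2"
    using step1[OF assms(1) holg \<delta>2] by blast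
  define R where "R = 1 / r"
  have R: "R > 1" using r by (simp add: R_def)
  have map: "complex_of_real r * w \<in> ball 0 1" if "w \<in> ball 0 R" for w
  proof -
    have "norm (complex_of_real r * w) = r * norm w" using r by (simp add: norm_mult)
    also have "\<dots> < r * R" using that r by simp
    also have "r * R = 1" using r by (simp add: R_def)
    finally show ?thesis by simp
  qed
  define f where "f = (\<lambda>w. g (complex_of_real r * w))"
  have holf: "f holomorphic_on ball 0 R"
  proof -
    have "(g \<circ> (\<lambda>w. complex_of_real r * w)) holomorphic_on ball 0 R"
      by (rule holomorphic_on_compose_gen[OF _ holg]) (auto intro!: holomorphic_intros map)
    then show ?thesis by (simp add: f_def o_def)
  qed
  have nzf: "\<forall>z\<in>ball 0 R. f z \<noteq> 0"
    using map assms(3) by (force simp: f_def)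
  obtain c :: "nat \<Rightarrow> complex" and d :: nat where d: "d \<ge> 1" "c d \<noteq> 0"
    and cnz: "\<forall>z\<in>cball 0 1. (\<Sum>j\<le>d. c j * z ^ j) \<noteq> 0"
    and est2: "\<forall>n\<le>k. \<forall>z\<in>ball 0 1. norm ((deriv ^^ n) f z - (deriv ^^ n) (\<lambda>z. (\<Sum>j\<le>d. c j * z ^ j) ^ 2) z) \<le> \<delta>/2"
    using step2[OF R holf nzf \<delta>2, of k] by blast
  define p where "p = (\<Sum>j\<le>d. monom (c j) j)"
  have polyp: "poly p z = (\<Sum>j\<le>d. c j * z ^ j)" for z
    by (simp add: p_def poly_sum poly_monom)
  have "coeff p d = c d"
    by (simp add: p_def coeff_sum coeff_monom)
  then have "d \<le> degree p" using d by (intro le_degree) simp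
  then have degp: "degree p \<ge> 1" using d by simp
  have "\<forall>z\<in>cball 0 1. poly p z \<noteq> 0" using cnz polyp by simp
  from factor_square[OF degp this]
  obtain M :: nat and \<alpha>0 :: complex and \<alpha> :: "nat \<Rightarrow> complex" and N :: "nat \<Rightarrow> nat"
    where M: "M > 0" and \<alpha>: "\<forall>i\<in>{1..M}. norm (\<alpha> i) > 1 \<and> N i \<ge> 1"
      and feq: "\<forall>z. (poly p z)^2 = \<alpha>0 * (\<Prod>i=1..M. (z - \<alpha> i) ^ (2 * N i))" by blast
  have Qeq: "(\<lambda>z. \<alpha>0 * (\<Prod>i=1..M. (z - \<alpha> i) ^ (2 * N i))) = (\<lambda>z. (\<Sum>j\<le>d. c j * z ^ j) ^ 2)"
  proof (rule ext)
    fix z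
    have "(\<Sum>j\<le>d. c j * z ^ j) ^ 2 = \<alpha>0 * (\<Prod>i=1..M. (z - \<alpha> i) ^ (2 * N i))"
      using feq[rule_format, of z] by (simp only: polyp)
    then show "\<alpha>0 * (\<Prod>i=1..M. (z - \<alpha> i) ^ (2 * N i)) = (\<Sum>j\<le>d. c j * z ^ j) ^ 2" by simp
  qed
  show ?thesis
  proof (intro exI conjI)
    show "M > 0" by (rule M)
    show "\<forall>i\<in>{1..M}. norm (\<alpha> i) > 1 \<and> N i \<ge> 1" by (rule \<alpha>)
    show "\<forall>n\<le>k. \<forall>z\<in>ball 0 1. norm ((deriv ^^ n) g z - (deriv ^^ n) (\<lambda>z. \<alpha>0 * (\<Prod>i=1..M. (z - \<alpha> i) ^ (2 * N i))) z) \<le> \<delta>"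
    proof (intro allI impI ballI)
      fix n z assume n: "n \<le> k" and z: "z \<in> ball (0::complex) 1"
      have zR: "z \<in> ball 0 R" using z R by auto
      have fd: "(deriv ^^ n) f z = complex_of_real r ^ n * (deriv ^^ n) g (complex_of_real r * z)"
        unfolding f_def by (rule higher_deriv_compose_linear[OF holg open_ball open_ball zR map])
      let ?Q = "(deriv ^^ n) (\<lambda>z. (\<Sum>j\<le>d. c j * z ^ j) ^ 2) z"
      have "norm ((deriv ^^ n) g z - ?Q) \<le>
          norm ((deriv ^^ n) g z - complex_of_real r ^ n * (deriv ^^ n) g (complex_of_real r * z)) + norm ((deriv ^^ n) f z - ?Q)"
        unfolding fd by (rule norm_diff_triangle_ineq[THEN order_trans[rotated]]) (simp add: algebra_simps)
      also have "\<dots> \<le> \<delta>/2 + \<delta>/2" using est1 est2 n z by (meson add_mono)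
      finally show "norm ((deriv ^^ n) g z - (deriv ^^ n) (\<lambda>z. \<alpha>0 * (\<Prod>i=1..M. (z - \<alpha> i) ^ (2 * N i))) z) \<le> \<delta>"
        unfolding Qeq by simp
    qed
  qed
qed

theorem lemma2p1:
  fixes g :: "complex \<Rightarrow> complex" and \<epsilon>0 :: real and k :: nat
  assumes "smooth_on_set (cball 0 1) g"
    and "g analytic_on ball 0 1"
    and "\<forall>z\<in>cball 0 1. norm (g z) > 0"
    and "\<epsilon>0 > 0" and "k > 0"
  shows "\<exists>(M::nat) (\<alpha>0::complex) (\<alpha>::nat \<Rightarrow> complex) (N::nat \<Rightarrow> nat). M > 0 \<and>
           (\<forall>i\<in>{1..M}. norm (\<alpha> i) > 1 \<and> N i \<ge> 1) \<and>
           Ck_norm k (cball 0 1) (\<lambda>z. g z - \<alpha>0 * (\<Prod>i=1..M. (z - \<alpha> i) ^ (2 * N i))) < \<epsilon>0"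
proof -
  let ?S = "cball 0 1 :: complex set"
  define I where "I = {(a, b). a + b \<le> k}"
  have finI: "finite I"
    by (rule finite_subset[of _ "{..k} \<times> {..k}"]) (auto simp: I_def)
  define \<delta> where "\<delta> = \<epsilon>0 / (real (card I) + 1)"
  have \<delta>: "\<delta> > 0" using assms(4) by (simp add: \<delta>_def add_nonneg_pos)
  obtain M :: nat and \<alpha>0 :: complex and \<alpha> :: "nat \<Rightarrow> complex" and N :: "nat \<Rightarrow> nat" where M: "M > 0" and \<alpha>: "\<forall>i\<in>{1..M}. norm (\<alpha> i) > 1 \<and> N i \<ge> 1"
    and est: "\<forall>n\<le>k. \<forall>z\<in>ball 0 1. norm ((deriv ^^ n) g z - (deriv ^^ n) (\<lambda>z. \<alpha>0 * (\<Prod>i=1..M. (z - \<alpha> i) ^ (2 * N i))) z) \<le> \<delta>"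
    using propA[OF assms(1-3) \<delta>, of k] by blast
  define P where "P = (\<lambda>z. \<alpha>0 * (\<Prod>i=1..M. (z - \<alpha> i) ^ (2 * N i)))"
  have holP: "P holomorphic_on UNIV" unfolding P_def by (intro holomorphic_intros)
  have smP: "smooth_on_set ?S P" by (rule smooth_entire[OF holP])
  have holg: "g holomorphic_on ball 0 1" using assms(2) by (simp add: analytic_imp_holomorphic)
  have bound: "norm (iter_pd (replicate a 1 @ replicate b \<i>) ?S (\<lambda>z. g z - P z) z) \<le> \<delta>"
    if ab: "a + b \<le> k" and z: "z \<in> ?S" for a b z
  proof -
    define ds :: "complex list" where "ds = replicate a 1 @ replicate b \<i>"
    have ds: "set ds \<subseteq> {1, \<i>}" unfolding ds_def by auto
    have len: "length ds \<le> k" using ab by (simp add: ds_def)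
    have eq: "iter_pd ds ?S (\<lambda>z. g z - P z) z = iter_pd ds ?S g z - iter_pd ds ?S P z"
      by (rule iter_pd_diff[OF assms(1) smP ds z])
    have "norm (iter_pd ds ?S g z - iter_pd ds ?S P z) \<le> \<delta>"
    proof (rule continuous_on_closure_norm_le[of "ball 0 1" "\<lambda>z. iter_pd ds ?S g z - iter_pd ds ?S P z" \<delta> z])
      show "continuous_on (closure (ball 0 1)) (\<lambda>z. iter_pd ds ?S g z - iter_pd ds ?S P z)"
        using smooth_cont[OF assms(1) ds] smooth_cont[OF smP ds] by (auto intro!: continuous_intros)
      show "z \<in> closure (ball 0 1)" using z by simp
      show "\<forall>y\<in>ball 0 1. norm (iter_pd ds ?S g y - iter_pd ds ?S P y) \<le> \<delta>"
      proof
        fix y :: complex assume y: "y \<in> ball 0 1"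
        have "iter_pd ds ?S g y = prod_list ds * (deriv ^^ length ds) g y"
          using iter_pd_holo[OF open_ball holg, of ds] y by auto
        moreover have "iter_pd ds ?S P y = prod_list ds * (deriv ^^ length ds) P y"
          using iter_pd_holo[OF open_UNIV holP, of ds] y by auto
        ultimately have "norm (iter_pd ds ?S g y - iter_pd ds ?S P y) =
            norm ((deriv ^^ length ds) g y - (deriv ^^ length ds) P y)"
          by (simp add: norm_mult norm_prod_list_unit[OF ds] flip: right_diff_distrib)
        also have "\<dots> \<le> \<delta>" using est len y unfolding P_def by blast
        finally show "norm (iter_pd ds ?S g y - iter_pd ds ?S P y) \<le> \<delta>" .
      qed
    qed
    then show ?thesis using eq ds_def by simp
  qed
  have "Ck_norm k ?S (\<lambda>z. g z - P z) \<le> (\<Sum>ab\<in>I. \<delta>)"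
    unfolding Ck_norm_def I_def[symmetric]
  proof (rule sum_mono)
    fix ab assume "ab \<in> I"
    then obtain a b where ab: "ab = (a, b)" "a + b \<le> k" unfolding I_def by auto
    show "(case ab of (a, b) \<Rightarrow> SUP z\<in>?S. norm (iter_pd (replicate a 1 @ replicate b \<i>) ?S (\<lambda>z. g z - P z) z)) \<le> \<delta>"
      unfolding ab(1) using bound[OF ab(2)] by (auto intro!: cSUP_least)
  qed
  also have "\<dots> = real (card I) * \<delta>" by simp
  also have "\<dots> < \<epsilon>0" unfolding \<delta>_def using assms(4)
    by (simp add: field_simps)
  finally show ?thesis using M \<alpha> unfolding P_def by blast
qed

end
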